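(* Suppose Assumption A and Assumption B (defined in the context) hold for the dynamic accuracy DFO algorithm described in the context, with criticality parameter $\epsilon\in(0,1]$, and suppose $\|\nabla f(\theta^k)\|\ge\epsilon$ for all $k=0,\ldots,k_\epsilon$. Then for every objective evaluation in iterations $k\le k_\epsilon$ it suffices to guarantee $\|\tilde x_i(\theta)-\hat x_i(\theta)\|=\mathcal{O}(\epsilon^2)$ for all $i=1,\ldots,n$; that is, there is a constant $C>0$ independent of $\epsilon$ such that if every evaluation point $\theta$ used in iterations $k\le k_\epsilon$ satisfies $\|\tilde x_i(\theta)-\hat x_i(\theta)\|\le C\epsilon^2$ for all $i$, then both accuracy requirements $\delta^k\le\eta_1'[m^k(0)-m^k(s^k)]$ and $\delta^k_+\le\eta_1'[m^k(0)-m^k(s^k)]$ hold, and the model-accuracy requirement $\|\tilde x_i(z^t)-\hat x_i(z^t)\|\le c(\Delta^k)^2$ (for a fixed $c>0$, used to guarantee full linearity) holds at the interpolation points.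
   Context: Setting. Let $n,d\ge 1$, data $x_1,\ldots,x_n$, and $\hat x_i(\theta)$ the (exact) lower-level minimizers, with $r_i(\theta)=\|\hat x_i(\theta)-x_i\|$, $r=(r_1,\ldots,r_n):\mathbb{R}^d\to\mathbb{R}^n$ and objective $f(\theta)=\frac1n\|r(\theta)\|^2$. For any $\theta$ one can compute an approximation $\tilde x_i(\theta)$ with $\|\tilde x_i(\theta)-\hat x_i(\theta)\|$ as small as desired; set $\tilde r_i(\theta)=\|\tilde x_i(\theta)-x_i\|$ and $\tilde f(\theta)=\frac1n\|\tilde r(\theta)\|^2$. We say $\tilde f(\theta)$ is evaluated with accuracy $\delta$ if $|\tilde f(\theta)-f(\theta)|\le\delta$. Models. At iteration $k$ the algorithm holds an iterate $\theta^k$, a radius $\Delta^k>0$, and interpolation points $z^0=\theta^k,z^1,\ldots,z^d\in\mathbb{R}^d$ with $z^1-\theta^k,\ldots,z^d-\theta^k$ linearly independent; $J^k\in\mathbb{R}^{n\times d}$ is the unique matrix with $\tilde r(\theta^k)+J^k(z^t-\theta^k)=\tilde r(z^t)$ for $t=1,\ldots,d$. Set $M^k(s)=\tilde r(\theta^k)+J^k s$ and $m^k(s)=\frac1n\|M^k(s)\|^2=\tilde f(\theta^k)+(g^k)^Ts+\frac12 s^TH^ks$ with $g^k=\frac2n (J^k)^T\tilde r(\theta^k)$, $H^k=\frac2n(J^k)^TJ^k$. Fixed constants $\kappa_{\rm ef},\kappa_{\rm eg}>0$ (independent of $k,\theta^k,\Delta^k$) are given, and $m^k$ is called fully linear in $B(\theta^k,\Delta^k)$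 if $|f(\theta^k+s)-m^k(s)|\le\kappa_{\rm ef}(\Delta^k)^2$ and $\|\nabla f(\theta^k+s)-\nabla m^k(s)\|\le\kappa_{\rm eg}\Delta^k$ for all $\|s\|\le\Delta^k$. Full linearity is guaranteed by using well-poised interpolation sets with evaluations satisfying $\|\tilde x_i(z^t)-\hat x_i(z^t)\|\le c(\Delta^k)^2$ for a fixed $c>0$. Algorithm. Parameters: $\Delta_{\max}>0$, $0<\gamma_{\rm dec}<1<\gamma_{\rm inc}$, $0<\eta_1\le\eta_2<1$, $0<\eta_1'<\min(\eta_1,1-\eta_2)/2$, $\epsilon>0$; inputs $\theta^0\in\mathbb{R}^d$, $0<\Delta^0\le\Delta_{\max}$. Build an initial model $m^0$ from an arbitrary interpolation set. For $k=0,1,2,\ldots$: (1) [accuracy phase] repeat: (a) except on the first pass, re-evaluate $\tilde f(\theta^k)$ with accuracy $\delta^k\le\eta_1'[m^k(0)-m^k(s^k)]$ using the $s^k$ from the previous pass; (b) [criticality phase] if $\|g^k\|\le\epsilon$, replace $\Delta^k$ by $\gamma_{\rm dec}^i\Delta^k$ for $i=0,1,2,\ldots$ (making the model fully linear in the current ball) until $m^k$ is fully linear in $B(\theta^k,\Delta^k)$ and $\Delta^k\le\|g^k\|$; (c) compute $s^k$ with $\|s^k\|\le\Delta^k$ approximately minimizing $m^k$ over that ball; until $\tilde f(\theta^k)$ has been evaluated with accuracy $\delta^k\le\eta_1'[m^k(0)-m^k(s^k)]$. (2) Evaluate $\tilde f(\theta^k+s^k)$ with accuracy $\delta^k_+\le\eta_1'[m^k(0)-m^k(s^k)]$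 and set $\tilde\rho^k=\frac{\tilde f(\theta^k)-\tilde f(\theta^k+s^k)}{m^k(0)-m^k(s^k)}$. (3) Set $\theta^{k+1}=\theta^k+s^k$ if $\tilde\rho^k\ge\eta_2$, or if $\tilde\rho^k\ge\eta_1$ and $m^k$ is fully linear in $B(\theta^k,\Delta^k)$; otherwise $\theta^{k+1}=\theta^k$. Set $\Delta^{k+1}=\min(\gamma_{\rm inc}\Delta^k,\Delta_{\max})$ if $\tilde\rho^k\ge\eta_2$; $\Delta^{k+1}=\Delta^k$ if $\tilde\rho^k<\eta_2$ and $m^k$ is not fully linear in $B(\theta^k,\Delta^k)$; $\Delta^{k+1}=\gamma_{\rm dec}\Delta^k$ otherwise. (4) If $\theta^{k+1}=\theta^k+s^k$, form $m^{k+1}$ by adding $\theta^{k+1}$ to the interpolation set (removing an existing point); otherwise set $m^{k+1}=m^k$ if $m^k$ is fully linear in $B(\theta^k,\Delta^k)$, else form $m^{k+1}$ by making $m^k$ fully linear in $B(\theta^{k+1},\Delta^{k+1})$. Assumption A: the set $\mathcal{B}=\{z: \|z-\theta\|\le\Delta_{\max}\text{ for some }\theta\text{ with }f(\theta)\le f(\theta^0)\}$ is bounded, and $r$ is continuously differentiable on $\mathcal{B}$ with $\partial r$ Lipschitz continuous with constant $L_J$ on $\mathcal{B}$. Assumption B: for all $k$, $m^k(0)-m^k(s^k)\ge\frac12\|g^k\|\min\left(\Delta^k,\frac{\|g^k\|}{\|H^k\|+1}\right)$, and there is $\kappa_H\ge1$ with $\|H^k\|+1\le\kappa_H$ for all $k$.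 *)

theory Defs
  imports "HOL-Analysis.Analysis"
begin

text \<open>Parameters theta live in a Euclidean space 'a (dimension d = DIM('a)); the lower-level
variables live in a Euclidean space 'b; the n data points are indexed by a finite type 'n
(n = CARD('n)).  xs i is the data point x_i and xhat i theta is the lower-level minimiser.\<close>

definition fval :: "real^'n \<Rightarrow> real" where
  "fval v = (norm v)^2 / real CARD('n)"

definition rres :: "('n::finite \<Rightarrow> 'b::real_normed_vector) \<Rightarrow> ('n \<Rightarrow> 'a \<Rightarrow> 'b) \<Rightarrow> 'a \<Rightarrow> real^'n" where
  "rres xs xhat theta = (\<chi> i. norm (xhat i theta - xs i))"

definition fobj :: "('n::finite \<Rightarrow> 'b::real_normed_vector) \<Rightarrow> ('n \<Rightarrow> 'a \<Rightarrow> 'b) \<Rightarrow> 'a \<Rightarrow> real" where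
  "fobj xs xhat theta = fval (rres xs xhat theta)"

text \<open>An evaluation at a point returns approximations xt i of xhat i (theta).\<close>

definition rtil :: "('n::finite \<Rightarrow> 'b::real_normed_vector) \<Rightarrow> ('n \<Rightarrow> 'b) \<Rightarrow> real^'n" where
  "rtil xs xt = (\<chi> i. norm (xt i - xs i))"

definition ftil :: "('n::finite \<Rightarrow> 'b::real_normed_vector) \<Rightarrow> ('n \<Rightarrow> 'b) \<Rightarrow> real" where
  "ftil xs xt = fval (rtil xs xt)"

text \<open>A model is a pair (xt, J): xt is the evaluation at the current iterate (giving
rtil(theta^k)) and J is the (linear) interpolation Jacobian.  M(s) = rtil + J s.\<close>

definition mval :: "('n::finite \<Rightarrow> 'b::real_normed_vector) \<Rightarrow> ('n \<Rightarrow> 'b) \<times> ('a \<Rightarrow> real^'n) \<Rightarrow> 'a \<Rightarrow> real" where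
  "mval xs M s = fval (rtil xs (fst M) + snd M s)"

definition mgrad :: "('n::finite \<Rightarrow> 'b::real_normed_vector) \<Rightarrow> ('n \<Rightarrow> 'b) \<times> ('a::real_inner \<Rightarrow> real^'n) \<Rightarrow> 'a" where
  "mgrad xs M = (2 / real CARD('n)) *\<^sub>R adjoint (snd M) (rtil xs (fst M))"

definition mhess :: "('n::finite \<Rightarrow> 'b) \<times> ('a::real_inner \<Rightarrow> real^'n) \<Rightarrow> 'a \<Rightarrow> 'a" where
  "mhess M = (\<lambda>s. (2 / real CARD('n)) *\<^sub>R adjoint (snd M) (snd M s))"

definition fully_linear ::
  "real \<Rightarrow> real \<Rightarrow> ('a::real_inner \<Rightarrow> real) \<Rightarrow> ('n::finite \<Rightarrow> 'b::real_normed_vector)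
    \<Rightarrow> ('n \<Rightarrow> 'b) \<times> ('a \<Rightarrow> real^'n) \<Rightarrow> 'a \<Rightarrow> real \<Rightarrow> bool" where
  "fully_linear kef keg F xs M theta D \<longleftrightarrow>
     (\<forall>s. norm s \<le> D \<longrightarrow>
        \<bar>F (theta + s) - mval xs M s\<bar> \<le> kef * D^2 \<and>
        (\<exists>G. (GDERIV F (theta + s) :> G) \<and> norm (G - (mgrad xs M + mhess M s)) \<le> keg * D))"

text \<open>Trace of iterations of the algorithm.
  th k      : iterate theta^k
  Din k     : radius at the start of iteration k (before the criticality phase)
  m0 k      : model at the start of iteration k (m^k as handed over by step 4, or m^0)
  crit k    : whether the criticality phase is entered (||g^k|| <= eps)
  ncrit k   : number i of the final shrink step in the criticality phase
  cm k j    : model made fully linear in B(theta^k, gdec^j Din k) in the criticality phase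
  cerr k j  : max error ||xtilde_i(z^t) - xhat_i(z^t)|| over the other interpolation points z^t
              evaluated when building cm k j
  st k      : step s^k
  xp k      : evaluation at theta^k + s^k (step 2)
  ferr k    : max interpolation-point error when the model m^(k+1) is made fully linear
              in step 4.\<close>

record ('a, 'b, 'n) dfo_run =
  th :: "nat \<Rightarrow> 'a"
  Din :: "nat \<Rightarrow> real"
  m0 :: "nat \<Rightarrow> ('n \<Rightarrow> 'b) \<times> ('a \<Rightarrow> real^'n::finite)"
  crit :: "nat \<Rightarrow> bool"
  ncrit :: "nat \<Rightarrow> nat"
  cm :: "nat \<Rightarrow> nat \<Rightarrow> ('n \<Rightarrow> 'b) \<times> ('a \<Rightarrow> real^'n)"
  cerr :: "nat \<Rightarrow> nat \<Rightarrow> real"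
  st :: "nat \<Rightarrow> 'a"
  xp :: "nat \<Rightarrow> 'n \<Rightarrow> 'b"
  ferr :: "nat \<Rightarrow> real"

definition finm :: "('a, 'b, 'n::finite, 'z) dfo_run_scheme \<Rightarrow> nat \<Rightarrow> ('n \<Rightarrow> 'b) \<times> ('a \<Rightarrow> real^'n)" where
  "finm R k = (if crit R k then cm R k (ncrit R k) else m0 R k)"

definition Dfin :: "real \<Rightarrow> ('a, 'b, 'n::finite, 'z) dfo_run_scheme \<Rightarrow> nat \<Rightarrow> real" where
  "Dfin gdec R k = (if crit R k then gdec ^ ncrit R k * Din R k else Din R k)"

definition pdec :: "('n::finite \<Rightarrow> 'b::real_normed_vector) \<Rightarrow> ('a::real_normed_vector, 'b, 'n, 'z) dfo_run_scheme \<Rightarrow> nat \<Rightarrow> real" where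
  "pdec xs R k = mval xs (finm R k) 0 - mval xs (finm R k) (st R k)"

definition rhot :: "('n::finite \<Rightarrow> 'b::real_normed_vector) \<Rightarrow> ('a::real_normed_vector, 'b, 'n, 'z) dfo_run_scheme \<Rightarrow> nat \<Rightarrow> real" where
  "rhot xs R k = (ftil xs (fst (finm R k)) - ftil xs (xp R k)) / pdec xs R k"

definition FLk where
  "FLk kef keg xs xhat gdec R k \<longleftrightarrow>
     fully_linear kef keg (fobj xs xhat) xs (finm R k) (th R k) (Dfin gdec R k)"

definition accepted where
  "accepted kef keg xs xhat gdec eta1 eta2 R k \<longleftrightarrow>
     eta2 \<le> rhot xs R k \<or> (eta1 \<le> rhot xs R k \<and> FLk kef keg xs xhat gdec R k)"

text \<open>Step 4 rebuilds the model (making it fully linear in B(theta^(k+1), Delta^(k+1)))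
  exactly when the step is rejected and m^k is not fully linear.\<close>

definition rebuilt where
  "rebuilt kef keg xs xhat gdec eta1 eta2 R k \<longleftrightarrow>
     \<not> accepted kef keg xs xhat gdec eta1 eta2 R k \<and> \<not> FLk kef keg xs xhat gdec R k"

text \<open>Validity of iterations 0..K of the algorithm (one pass of the accuracy phase each).\<close>

definition dfo_run ::
  "('n::finite \<Rightarrow> 'b::euclidean_space) \<Rightarrow> ('n \<Rightarrow> 'a::euclidean_space \<Rightarrow> 'b) \<Rightarrow> real \<Rightarrow> real \<Rightarrow> real
   \<Rightarrow> real \<Rightarrow> real \<Rightarrow> real \<Rightarrow> real \<Rightarrow> real \<Rightarrow> real \<Rightarrow> 'a \<Rightarrow> real \<Rightarrow> nat
   \<Rightarrow> ('a, 'b, 'n, 'z) dfo_run_scheme \<Rightarrow> bool" where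
  "dfo_run xs xhat kef keg c Dmax gdec ginc eta1 eta2 eps th0 D0 K R \<longleftrightarrow>
    th R 0 = th0 \<and> Din R 0 = D0 \<and>
    (\<forall>k \<le> Suc K. linear (snd (m0 R k))) \<and>
    (\<forall>k \<le> K.
      (crit R k \<longleftrightarrow> norm (mgrad xs (m0 R k)) \<le> eps) \<and>
      (crit R k \<longrightarrow>
         (\<forall>j \<le> ncrit R k. linear (snd (cm R k j)) \<and>
            ((\<forall>i. norm (fst (cm R k j) i - xhat i (th R k)) \<le> c * (gdec ^ j * Din R k)^2)
               \<and> cerr R k j \<le> c * (gdec ^ j * Din R k)^2
             \<longrightarrow> fully_linear kef keg (fobj xs xhat) xs (cm R k j) (th R k) (gdec ^ j * Din R k))) \<and>
         (\<forall>j < ncrit R k.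
            \<not> (fully_linear kef keg (fobj xs xhat) xs (cm R k j) (th R k) (gdec ^ j * Din R k)
                 \<and> gdec ^ j * Din R k \<le> norm (mgrad xs (cm R k j)))) \<and>
         fully_linear kef keg (fobj xs xhat) xs (cm R k (ncrit R k)) (th R k) (Dfin gdec R k) \<and>
         Dfin gdec R k \<le> norm (mgrad xs (cm R k (ncrit R k)))) \<and>
      norm (st R k) \<le> Dfin gdec R k \<and>
      th R (Suc k) = (if accepted kef keg xs xhat gdec eta1 eta2 R k then th R k + st R k else th R k) \<and>
      Din R (Suc k) =
        (if eta2 \<le> rhot xs R k then min (ginc * Dfin gdec R k) Dmax
         else if \<not> FLk kef keg xs xhat gdec R k then Dfin gdec R k
         else gdec * Dfin gdec R k) \<and>
      (if accepted kef keg xs xhat gdec eta1 eta2 R k then fst (m0 R (Suc k)) = xp R k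
       else if FLk kef keg xs xhat gdec R k then m0 R (Suc k) = finm R k
       else ((\<forall>i. norm (fst (m0 R (Suc k)) i - xhat i (th R (Suc k))) \<le> c * (Din R (Suc k))^2)
               \<and> ferr R k \<le> c * (Din R (Suc k))^2
             \<longrightarrow> fully_linear kef keg (fobj xs xhat) xs (m0 R (Suc k)) (th R (Suc k)) (Din R (Suc k)))))"

definition assumptionB where
  "assumptionB xs gdec kH K R \<longleftrightarrow>
    (\<forall>k \<le> K.
       pdec xs R k \<ge> 1/2 * norm (mgrad xs (finm R k)) *
          min (Dfin gdec R k) (norm (mgrad xs (finm R k)) / (onorm (mhess (finm R k)) + 1)) \<and>
       onorm (mhess (finm R k)) + 1 \<le> kH)"

definition assumptionA where
  "assumptionA xs xhat th0 Dmax \<longleftrightarrow>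
    (let B = {z. \<exists>theta. fobj xs xhat theta \<le> fobj xs xhat th0 \<and> dist z theta \<le> Dmax} in
      bounded B \<and>
      (\<exists>J LJ. (\<forall>theta \<in> B. (rres xs xhat has_derivative J theta) (at theta)) \<and>
              (\<forall>theta \<in> B. \<forall>theta' \<in> B. onorm (\<lambda>h. J theta h - J theta' h) \<le> LJ * dist theta theta')))"

definition evals_within where
  "evals_within xs xhat e K R \<longleftrightarrow>
    (\<forall>k \<le> Suc K. \<forall>i. norm (fst (m0 R k) i - xhat i (th R k)) \<le> e) \<and>
    (\<forall>k \<le> K.
       (crit R k \<longrightarrow> (\<forall>j \<le> ncrit R k.
          (\<forall>i. norm (fst (cm R k j) i - xhat i (th R k)) \<le> e) \<and> cerr R k j \<le> e)) \<and>
       (\<forall>i. norm (xp R k i - xhat i (th R k + st R k)) \<le> e) \<and>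
       ferr R k \<le> e)"

end

theory Submission
  imports Defs
begin


lemma norm_rres_sq:
  "(norm (rres xs xhat theta))^2 = real CARD('n) * fobj xs xhat theta"
  for xs :: "'n::finite \<Rightarrow> 'b::real_normed_vector"
  by (simp add: fobj_def fval_def)

lemma rres_bound:
  fixes xs :: "'n::finite \<Rightarrow> 'b::euclidean_space"
    and xhat :: "'n \<Rightarrow> 'a::euclidean_space \<Rightarrow> 'b"
  assumes A: "assumptionA xs xhat th0 Dmax" and Dm: "0 < Dmax"
  shows "\<exists>Rb\<ge>0. \<forall>theta z. fobj xs xhat theta \<le> fobj xs xhat th0 \<and> dist z theta \<le> Dmax
            \<longrightarrow> norm (rres xs xhat z) \<le> Rb"
proof -
  define B where "B = {z. \<exists>theta. fobj xs xhat theta \<le> fobj xs xhat th0 \<and> dist z theta \<le> Dmax}"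
  from A obtain J LJ where bB: "bounded B"
    and der: "\<forall>theta \<in> B. (rres xs xhat has_derivative J theta) (at theta)"
    and lip: "\<forall>theta \<in> B. \<forall>theta' \<in> B. onorm (\<lambda>h. J theta h - J theta' h) \<le> LJ * dist theta theta'"
    unfolding assumptionA_def Let_def B_def by blast
  have th0B: "th0 \<in> B" unfolding B_def using Dm by force
  from bB obtain a where a: "\<forall>x\<in>B. norm x \<le> a" by (auto simp: bounded_iff)
  define MJ where "MJ = onorm (J th0) + \<bar>LJ\<bar> * (2*a)"
  have bl: "bounded_linear (J t)" if "t \<in> B" for t
    using der that has_derivative_bounded_linear by blast
  have MJ: "onorm (J t) \<le> MJ" if t: "t \<in> B" for t
  proof -
    have "onorm (J t) = onorm (\<lambda>h. J th0 h + (J t h - J th0 h))" by simp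
    also have "\<dots> \<le> onorm (J th0) + onorm (\<lambda>h. J t h - J th0 h)"
      by (rule onorm_triangle) (auto intro!: bounded_linear_sub bl t th0B)
    also have "onorm (\<lambda>h. J t h - J th0 h) \<le> LJ * dist t th0" using lip t th0B by blast
    also have "LJ * dist t th0 \<le> \<bar>LJ\<bar> * (2*a)"
    proof -
      have "dist t th0 \<le> norm t + norm th0" by (simp add: dist_norm norm_triangle_ineq4)
      also have "\<dots> \<le> 2*a"
      proof -
        have "norm t \<le> a" "norm th0 \<le> a" using a t th0B by auto
        then show ?thesis by linarith
      qed
      finally have "dist t th0 \<le> 2*a" .
      then have "\<bar>LJ\<bar> * dist t th0 \<le> \<bar>LJ\<bar> * (2*a)" by (simp add: mult_left_mono)
      moreover have "LJ * dist t th0 \<le> \<bar>LJ\<bar> * dist t th0" by (simp add: mult_right_mono)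
      ultimately show ?thesis by linarith
    qed
    finally show ?thesis unfolding MJ_def by simp
  qed
  have MJ0: "0 \<le> MJ" using MJ[OF th0B] onorm_pos_le[OF bl[OF th0B]] by linarith
  define Rb where "Rb = sqrt (real CARD('n) * fobj xs xhat th0) + MJ * Dmax"
  have f0: "0 \<le> fobj xs xhat th0" by (simp add: fobj_def fval_def)
  show ?thesis
  proof (intro exI[of _ Rb] conjI allI impI)
    show "0 \<le> Rb" unfolding Rb_def using MJ0 Dm f0 by simp
    fix theta z assume h: "fobj xs xhat theta \<le> fobj xs xhat th0 \<and> dist z theta \<le> Dmax"
    have sub: "cball theta Dmax \<subseteq> B" unfolding B_def using h by (auto simp: dist_commute)
    have "norm (rres xs xhat z - rres xs xhat theta) \<le> MJ * norm (z - theta)"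
    proof (rule differentiable_bound[of "cball theta Dmax"])
      show "convex (cball theta Dmax)" by simp
      show "(rres xs xhat has_derivative J x) (at x within cball theta Dmax)" if "x \<in> cball theta Dmax" for x
        using der sub that has_derivative_at_withinI by blast
      show "onorm (J x) \<le> MJ" if "x \<in> cball theta Dmax" for x using MJ sub that by blast
      show "z \<in> cball theta Dmax" using h by (simp add: dist_commute)
      show "theta \<in> cball theta Dmax" using Dm by simp
    qed
    also have "MJ * norm (z - theta) \<le> MJ * Dmax"
      using h MJ0 by (simp add: dist_norm mult_left_mono)
    finally have 1: "norm (rres xs xhat z) \<le> norm (rres xs xhat theta) + MJ * Dmax"
      using norm_triangle_ineq2[of "rres xs xhat z" "rres xs xhat theta"] by linarith
    have "norm (rres xs xhat theta) = sqrt ((norm (rres xs xhat theta))^2)" by simp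
    also have "\<dots> = sqrt (real CARD('n) * fobj xs xhat theta)" by (simp only: norm_rres_sq)
    also have "\<dots> \<le> sqrt (real CARD('n) * fobj xs xhat th0)"
      using h by (simp add: mult_left_mono)
    finally show "norm (rres xs xhat z) \<le> Rb" unfolding Rb_def using 1 by linarith
  qed
qed




lemma eval_err:
  fixes xs :: "'n::finite \<Rightarrow> 'b::real_normed_vector"
    and xhat :: "'n \<Rightarrow> 'a \<Rightarrow> 'b"
  assumes err: "\<forall>i. norm (xt i - xhat i theta) \<le> e" and e0: "0 \<le> e" and e1: "e \<le> 1"
    and Rb: "norm (rres xs xhat theta) \<le> Rb"
  shows "\<bar>ftil xs xt - fobj xs xhat theta\<bar> \<le> (2*Rb + real CARD('n)) * e"
proof -
  define u where "u = rtil xs xt"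
  define v where "v = rres xs xhat theta"
  define n where "n = real CARD('n)"
  have n1: "1 \<le> n" unfolding n_def by (simp add: Suc_leI)
  have comp: "\<bar>(u - v) $ i\<bar> \<le> e" for i
  proof -
    have "\<bar>(u - v) $ i\<bar> = \<bar>norm (xt i - xs i) - norm (xhat i theta - xs i)\<bar>"
      by (simp add: u_def v_def rtil_def rres_def)
    also have "\<dots> \<le> norm ((xt i - xs i) - (xhat i theta - xs i))" by (rule norm_triangle_ineq3)
    also have "\<dots> = norm (xt i - xhat i theta)" by simp
    finally show ?thesis using err by (meson order_trans)
  qed
  have duv: "norm (u - v) \<le> n * e"
  proof -
    have "norm (u - v) \<le> (\<Sum>i\<in>UNIV. \<bar>(u - v) $ i\<bar>)" by (rule norm_le_l1_cart)
    also have "\<dots> \<le> (\<Sum>i\<in>(UNIV::'n set). e)" by (rule sum_mono) (rule comp)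
    finally show ?thesis by (simp add: n_def)
  qed
  have "\<bar>(norm u)^2 - (norm v)^2\<bar> = \<bar>norm u - norm v\<bar> * (norm u + norm v)"
  proof -
    have "(norm u)^2 - (norm v)^2 = (norm u - norm v) * (norm u + norm v)"
      by (simp add: power2_eq_square algebra_simps)
    then show ?thesis by (simp add: abs_mult)
  qed
  also have "\<dots> \<le> norm (u - v) * (2 * norm v + norm (u - v))"
  proof (rule mult_mono)
    show "\<bar>norm u - norm v\<bar> \<le> norm (u - v)" by (rule norm_triangle_ineq3)
    show "norm u + norm v \<le> 2 * norm v + norm (u - v)"
      using norm_triangle_ineq[of "u - v" v] by simp
  qed auto
  also have "\<dots> \<le> (n * e) * (2 * Rb + n * e)"
    using duv Rb n1 e0 by (intro mult_mono add_mono) (auto simp: v_def)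
  also have "\<dots> \<le> (n * e) * (2 * Rb + n)"
  proof -
    have "n * e \<le> n" using n1 e1 by (simp add: mult_left_le)
    then show ?thesis using n1 e0 by (intro mult_left_mono) auto
  qed
  finally have 1: "\<bar>(norm u)^2 - (norm v)^2\<bar> \<le> (n * e) * (2 * Rb + n)" .
  have "ftil xs xt - fobj xs xhat theta = ((norm u)^2 - (norm v)^2) / n"
    by (simp add: ftil_def fobj_def fval_def u_def v_def n_def diff_divide_distrib)
  then have "\<bar>ftil xs xt - fobj xs xhat theta\<bar> = \<bar>(norm u)^2 - (norm v)^2\<bar> / n"
    using n1 by simp
  also have "\<dots> \<le> (n * e) * (2 * Rb + n) / n" using 1 n1 by (intro divide_right_mono) auto
  also have "\<dots> = (2*Rb + n) * e" using n1 by simp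
  finally show ?thesis by (simp add: n_def)
qed




lemma mval0: "linear (snd M) \<Longrightarrow> mval xs M 0 = ftil xs (fst M)"
  by (simp add: mval_def ftil_def linear_0)

lemma mhess_lin:
  fixes M :: "('n::finite \<Rightarrow> 'b) \<times> ('a::euclidean_space \<Rightarrow> real^'n)"
  assumes "linear (snd M)" shows "linear (mhess M)"
  unfolding mhess_def
  using assms adjoint_linear[OF assms] by (intro linear_compose_scale_right linear_compose[unfolded o_def, of "snd M" "adjoint (snd M)"]) 

lemma mhess0:
  fixes M :: "('n::finite \<Rightarrow> 'b) \<times> ('a::euclidean_space \<Rightarrow> real^'n)"
  assumes "linear (snd M)" shows "mhess M 0 = 0"
  using mhess_lin[OF assms] linear_0 by blast

lemma onorm_mhess:
  fixes M :: "('n::finite \<Rightarrow> 'b) \<times> ('a::euclidean_space \<Rightarrow> real^'n)"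
  assumes "linear (snd M)" shows "0 \<le> onorm (mhess M)"
  using mhess_lin[OF assms] by (simp add: linear_conv_bounded_linear onorm_pos_le)

lemma gderiv_unique:
  assumes "GDERIV f x :> G" "GDERIV f x :> G'" shows "G = G'"
proof -
  have "(\<lambda>h. inner h G) = (\<lambda>h. inner h G')"
    using assms unfolding gderiv_def by (rule has_derivative_unique)
  then have "inner (G - G') G = inner (G - G') G'" by metis
  then have "inner (G - G') (G - G') = 0" by (simp add: inner_diff_right)
  then show ?thesis by simp
qed




locale S =
  fixes xs :: "'n::finite \<Rightarrow> 'b::euclidean_space" and xhat :: "'n \<Rightarrow> 'a::euclidean_space \<Rightarrow> 'b"
    and th0 :: 'a and D0 Dmax gdec ginc eta1 eta2 eta1' kef keg c kH eps :: real
    and K :: nat and R :: "('a,'b,'n) dfo_run" and Rb C :: real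
  fixes g0 tau Lb e :: real
  defines "g0 \<equiv> eps / (1 + keg)"
    and "tau \<equiv> min (g0 / kH) ((1 - eta2) * g0 / (4 * kef))"
    and "Lb \<equiv> min D0 (gdec * tau)"
    and "e \<equiv> C * eps^2"
  assumes params: "0 < Dmax" "0 < gdec" "gdec < 1" "1 < ginc" "0 < eta1" "eta1 \<le> eta2" "eta2 < 1"
      "0 < eta1'" "eta1' < min eta1 (1-eta2)/2" "0 < D0" "D0 \<le> Dmax" "0<kef" "0<keg" "0<c" "1 \<le> kH"
  and eps: "0 < eps" "eps \<le> 1"
  and run: "dfo_run xs xhat kef keg c Dmax gdec ginc eta1 eta2 eps th0 D0 K R"
  and AB: "assumptionB xs gdec kH K R"
  and grad: "\<forall>k \<le> K. \<exists>G. (GDERIV (fobj xs xhat) (th R k) :> G) \<and> eps \<le> norm G"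
  and ev: "evals_within xs xhat e K R"
  and Rb: "\<forall>theta z. fobj xs xhat theta \<le> fobj xs xhat th0 \<and> dist z theta \<le> Dmax \<longrightarrow> norm (rres xs xhat z) \<le> Rb"
  and Cpos: "0 \<le> C"
  and e1: "e \<le> 1"
  and eL: "e \<le> c * Lb^2"
  and eP: "(2*Rb + real CARD('n)) * e \<le> eta1' * (1/2 * g0 * Lb)"
begin

abbreviation "f \<equiv> fobj xs xhat"
abbreviation "FL M t D \<equiv> fully_linear kef keg f xs M t D"

lemma g0pos: "0 < g0" using eps params unfolding g0_def by simp
lemma taupos: "0 < tau" using g0pos params unfolding tau_def by simp
lemma tau_le: "tau \<le> g0 / kH" "tau \<le> (1 - eta2) * g0 / (4 * kef)" unfolding tau_def by auto
lemma tau_g0: "tau \<le> g0"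
proof -
  have "g0 / kH \<le> g0" using g0pos params by (simp add: divide_le_eq)
  then show ?thesis using tau_le by linarith
qed
lemma Lbpos: "0 < Lb" using taupos params unfolding Lb_def by simp
lemma Lb_le: "Lb \<le> D0" "Lb \<le> gdec * tau" unfolding Lb_def by auto
lemma e0: "0 \<le> e" using Cpos unfolding e_def by simp

lemma eLD: "L \<le> D \<Longrightarrow> Lb \<le> L \<Longrightarrow> e \<le> c * D^2"
proof -
  assume "L \<le> D" "Lb \<le> L"
  then have "Lb^2 \<le> D^2" using Lbpos by (intro power_mono) auto
  then have "c * Lb^2 \<le> c * D^2" using params by simp
  then show ?thesis using eL by linarith
qed

lemma run_th0: "th R 0 = th0" and run_D0: "Din R 0 = D0"
  and run_lin: "\<forall>k \<le> Suc K. linear (snd (m0 R k))"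
  using run unfolding dfo_run_def by auto

lemma runk: "k \<le> K \<Longrightarrow>
      (crit R k \<longleftrightarrow> norm (mgrad xs (m0 R k)) \<le> eps) \<and>
      (crit R k \<longrightarrow>
         (\<forall>j \<le> ncrit R k. linear (snd (cm R k j)) \<and>
            ((\<forall>i. norm (fst (cm R k j) i - xhat i (th R k)) \<le> c * (gdec ^ j * Din R k)^2)
               \<and> cerr R k j \<le> c * (gdec ^ j * Din R k)^2
             \<longrightarrow> fully_linear kef keg (fobj xs xhat) xs (cm R k j) (th R k) (gdec ^ j * Din R k))) \<and>
         (\<forall>j < ncrit R k.
            \<not> (fully_linear kef keg (fobj xs xhat) xs (cm R k j) (th R k) (gdec ^ j * Din R k)
                 \<and> gdec ^ j * Din R k \<le> norm (mgrad xs (cm R k j)))) \<and>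
         fully_linear kef keg (fobj xs xhat) xs (cm R k (ncrit R k)) (th R k) (Dfin gdec R k) \<and>
         Dfin gdec R k \<le> norm (mgrad xs (cm R k (ncrit R k)))) \<and>
      norm (st R k) \<le> Dfin gdec R k \<and>
      th R (Suc k) = (if accepted kef keg xs xhat gdec eta1 eta2 R k then th R k + st R k else th R k) \<and>
      Din R (Suc k) =
        (if eta2 \<le> rhot xs R k then min (ginc * Dfin gdec R k) Dmax
         else if \<not> FLk kef keg xs xhat gdec R k then Dfin gdec R k
         else gdec * Dfin gdec R k)"
  using run unfolding dfo_run_def by blast

lemma ABk: "k \<le> K \<Longrightarrow> pdec xs R k \<ge> 1/2 * norm (mgrad xs (finm R k)) *
          min (Dfin gdec R k) (norm (mgrad xs (finm R k)) / (onorm (mhess (finm R k)) + 1)) \<and>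
       onorm (mhess (finm R k)) + 1 \<le> kH"
  using AB unfolding assumptionB_def by blast

lemma lin_finm: "k \<le> K \<Longrightarrow> linear (snd (finm R k))"
  using runk[of k] run_lin unfolding finm_def by auto

lemma err_finm: "k \<le> K \<Longrightarrow> \<forall>i. norm (fst (finm R k) i - xhat i (th R k)) \<le> e"
  using ev unfolding evals_within_def finm_def by auto

lemma grad_bound:
  assumes k: "k \<le> K" and lin: "linear (snd M)" and FL: "FL M (th R k) D" and D0: "0 \<le> D"
  shows "eps \<le> norm (mgrad xs M) + keg * D"
proof -
  obtain G where G: "GDERIV f (th R k) :> G" "eps \<le> norm G" using grad k by blast
  from FL D0 obtain G' where G': "GDERIV f (th R k + 0) :> G'"
     "norm (G' - (mgrad xs M + mhess M 0)) \<le> keg * D"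
    unfolding fully_linear_def by (metis norm_zero)
  have "G = G'" using G(1) G'(1) gderiv_unique by simp
  then have "norm (G - mgrad xs M) \<le> keg * D" using G'(2) mhess0[OF lin] by simp
  moreover have "norm G \<le> norm (mgrad xs M) + norm (G - mgrad xs M)"
    using norm_triangle_ineq[of "mgrad xs M" "G - mgrad xs M"] by simp
  ultimately show ?thesis using G(2) by linarith
qed

end


context S begin

lemma crit_stop:
  assumes k: "k \<le> K" and cr: "crit R k" and j: "j < ncrit R k" and L: "Lb \<le> gdec^j * Din R k"
  shows "g0 < gdec^j * Din R k"
proof (rule ccontr)
  define D where "D = gdec^j * Din R k"
  assume "\<not> g0 < gdec^j * Din R k"
  then have Dg: "D \<le> g0" unfolding D_def by simp
  have D0: "0 \<le> D" using L Lbpos unfolding D_def by simp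
  have eD: "e \<le> c * D^2" using eLD[of D D] L unfolding D_def by simp
  have R: "\<forall>j \<le> ncrit R k. linear (snd (cm R k j)) \<and>
            ((\<forall>i. norm (fst (cm R k j) i - xhat i (th R k)) \<le> c * (gdec ^ j * Din R k)^2)
               \<and> cerr R k j \<le> c * (gdec ^ j * Din R k)^2
             \<longrightarrow> FL (cm R k j) (th R k) (gdec ^ j * Din R k))"
    and NS: "\<forall>j < ncrit R k.
            \<not> (FL (cm R k j) (th R k) (gdec ^ j * Din R k)
                 \<and> gdec ^ j * Din R k \<le> norm (mgrad xs (cm R k j)))"
    using runk[OF k] cr by auto
  have E: "(\<forall>i. norm (fst (cm R k j) i - xhat i (th R k)) \<le> e) \<and> cerr R k j \<le> e"
    using ev k cr j unfolding evals_within_def by auto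
  have lin: "linear (snd (cm R k j))" using R j by auto
  have FL: "FL (cm R k j) (th R k) D"
    using R j E eD unfolding D_def by (meson less_imp_le order_trans)
  have "eps \<le> norm (mgrad xs (cm R k j)) + keg * D" by (rule grad_bound[OF k lin FL D0])
  moreover have "D * (1 + keg) \<le> eps" using Dg params unfolding g0_def by (simp add: le_divide_eq)
  ultimately have "D \<le> norm (mgrad xs (cm R k j))" by (simp add: algebra_simps)
  then show False using NS FL j unfolding D_def by blast
qed

lemma crit_Delta:
  assumes k: "k \<le> K" and cr: "crit R k" and L: "Lb \<le> Din R k"
  shows "j \<le> ncrit R k \<Longrightarrow> Lb \<le> gdec^j * Din R k"
proof (induction j)
  case 0 then show ?case using L by simp
next
  case (Suc j)
  then have "j < ncrit R k" by simp
  with Suc have "g0 < gdec^j * Din R k" using crit_stop[OF k cr] by simp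
  then have "gdec * g0 \<le> gdec * (gdec^j * Din R k)" using params by simp
  moreover have "gdec * tau \<le> gdec * g0" using tau_g0 params by simp
  ultimately show ?case using Lb_le by simp
qed

lemma Dfin_ge: "k \<le> K \<Longrightarrow> Lb \<le> Din R k \<Longrightarrow> Lb \<le> Dfin gdec R k"
  using crit_Delta[of k "ncrit R k"] unfolding Dfin_def by auto

lemma Dfin_le: "Lb \<le> Din R k \<Longrightarrow> Dfin gdec R k \<le> Din R k"
proof -
  assume "Lb \<le> Din R k"
  then have "0 \<le> Din R k" using Lbpos by simp
  moreover have "gdec ^ ncrit R k \<le> 1" using params by (simp add: power_le_one)
  ultimately show ?thesis unfolding Dfin_def using mult_left_le_one_le[of "Din R k" "gdec ^ ncrit R k"] params by simp
qed

lemma gfin: assumes k: "k \<le> K" and L: "Lb \<le> Din R k"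
  shows "g0 \<le> norm (mgrad xs (finm R k))"
proof (cases "crit R k")
  case True
  have FL: "FL (cm R k (ncrit R k)) (th R k) (Dfin gdec R k)"
    and Dg: "Dfin gdec R k \<le> norm (mgrad xs (cm R k (ncrit R k)))"
    and lin: "linear (snd (cm R k (ncrit R k)))"
    using runk[OF k] True by auto
  have D0: "0 \<le> Dfin gdec R k" using Dfin_ge[OF k L] Lbpos by simp
  have "eps \<le> norm (mgrad xs (cm R k (ncrit R k))) + keg * Dfin gdec R k"
    by (rule grad_bound[OF k lin FL D0])
  also have "\<dots> \<le> norm (mgrad xs (cm R k (ncrit R k))) * (1 + keg)"
    using Dg params by (simp add: algebra_simps)
  finally have "eps / (1 + keg) \<le> norm (mgrad xs (cm R k (ncrit R k)))"
    using params by (simp add: divide_le_eq)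
  then show ?thesis using True unfolding g0_def finm_def by simp
next
  case False
  then have "eps < norm (mgrad xs (m0 R k))" using runk[OF k] by auto
  moreover have "g0 \<le> eps" using eps params unfolding g0_def by (simp add: divide_le_eq)
  ultimately show ?thesis using False unfolding finm_def by simp
qed

lemma pdec_ge: assumes k: "k \<le> K" and L: "Lb \<le> Din R k"
  shows "1/2 * g0 * min (Dfin gdec R k) (g0 / kH) \<le> pdec xs R k"
proof -
  define g where "g = norm (mgrad xs (finm R k))"
  define h where "h = onorm (mhess (finm R k))"
  have B: "pdec xs R k \<ge> 1/2 * g * min (Dfin gdec R k) (g / (h + 1))" "h + 1 \<le> kH"
    using ABk[OF k] unfolding g_def h_def by auto
  have h0: "0 \<le> h" unfolding h_def by (rule onorm_mhess[OF lin_finm[OF k]])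
  have gg: "g0 \<le> g" unfolding g_def by (rule gfin[OF k L])
  have "g0 / kH \<le> g / (h + 1)"
    using h0 gg B(2) g0pos by (intro frac_le) auto
  then have m: "min (Dfin gdec R k) (g0 / kH) \<le> min (Dfin gdec R k) (g / (h + 1))" by simp
  have m0: "0 \<le> min (Dfin gdec R k) (g0 / kH)" using Dfin_ge[OF k L] Lbpos g0pos params by simp
  have "1/2 * g0 * min (Dfin gdec R k) (g0 / kH) \<le> 1/2 * g * min (Dfin gdec R k) (g / (h + 1))"
    using gg m m0 g0pos by (intro mult_mono) auto
  then show ?thesis using B by linarith
qed

lemma pdec_ge2: assumes k: "k \<le> K" and L: "Lb \<le> Din R k"
  shows "1/2 * g0 * Lb \<le> pdec xs R k"
proof -
  have "Lb \<le> g0 / kH" using Lb_le tau_le params taupos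
    by (smt (verit) mult_le_cancel_right1 mult_less_cancel_right2)
  then have "Lb \<le> min (Dfin gdec R k) (g0 / kH)" using Dfin_ge[OF k L] by simp
  then have "1/2 * g0 * Lb \<le> 1/2 * g0 * min (Dfin gdec R k) (g0 / kH)" using g0pos by simp
  then show ?thesis using pdec_ge[OF k L] by linarith
qed

end


context S begin

definition "Inv k \<longleftrightarrow> f (th R k) \<le> f th0 \<and> Lb \<le> Din R k \<and> Din R k \<le> Dmax"

lemma eP': "k \<le> K \<Longrightarrow> Lb \<le> Din R k \<Longrightarrow> (2*Rb + real CARD('n)) * e \<le> eta1' * pdec xs R k"
proof -
  assume k: "k \<le> K" and L: "Lb \<le> Din R k"
  have "eta1' * (1/2 * g0 * Lb) \<le> eta1' * pdec xs R k"
    using pdec_ge2[OF k L] params by (intro mult_left_mono) auto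
  then show ?thesis using eP by linarith
qed

lemma acc1: assumes k: "k \<le> K" and I: "Inv k"
  shows "\<bar>ftil xs (fst (finm R k)) - f (th R k)\<bar> \<le> eta1' * pdec xs R k"
proof -
  have "dist (th R k) (th R k) \<le> Dmax" using params by simp
  then have rb: "norm (rres xs xhat (th R k)) \<le> Rb" using Rb I unfolding Inv_def by blast
  have "\<bar>ftil xs (fst (finm R k)) - f (th R k)\<bar> \<le> (2*Rb + real CARD('n)) * e"
    by (rule eval_err[OF err_finm[OF k] e0 e1 rb])
  also have "\<dots> \<le> eta1' * pdec xs R k" using eP'[OF k] I unfolding Inv_def by simp
  finally show ?thesis .
qed

lemma st_Dmax: assumes k: "k \<le> K" and I: "Inv k" shows "norm (st R k) \<le> Dmax"
proof -
  have "norm (st R k) \<le> Dfin gdec R k" using runk[OF k] by simp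
  also have "\<dots> \<le> Din R k" using Dfin_le I unfolding Inv_def by simp
  finally show ?thesis using I unfolding Inv_def by simp
qed

lemma acc2: assumes k: "k \<le> K" and I: "Inv k"
  shows "\<bar>ftil xs (xp R k) - f (th R k + st R k)\<bar> \<le> eta1' * pdec xs R k"
proof -
  have "dist (th R k + st R k) (th R k) \<le> Dmax" using st_Dmax[OF k I] by (simp add: dist_norm)
  then have rb: "norm (rres xs xhat (th R k + st R k)) \<le> Rb" using Rb I unfolding Inv_def by blast
  have er: "\<forall>i. norm (xp R k i - xhat i (th R k + st R k)) \<le> e"
    using ev k unfolding evals_within_def by auto
  have "\<bar>ftil xs (xp R k) - f (th R k + st R k)\<bar> \<le> (2*Rb + real CARD('n)) * e"
    by (rule eval_err[OF er e0 e1 rb])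
  also have "\<dots> \<le> eta1' * pdec xs R k" using eP'[OF k] I unfolding Inv_def by simp
  finally show ?thesis .
qed

lemma pdec_pos: "k \<le> K \<Longrightarrow> Inv k \<Longrightarrow> 0 < pdec xs R k"
proof -
  assume k: "k \<le> K" and I: "Inv k"
  have "0 < 1/2 * g0 * Lb" using g0pos Lbpos by simp
  then show ?thesis using pdec_ge2[OF k] I unfolding Inv_def by fastforce
qed

lemma f_mono: assumes k: "k \<le> K" and I: "Inv k" shows "f (th R (Suc k)) \<le> f (th R k)"
proof (cases "accepted kef keg xs xhat gdec eta1 eta2 R k")
  case True
  define P where "P = pdec xs R k"
  have P: "0 < P" using pdec_pos[OF k I] unfolding P_def by simp
  have "eta1 \<le> rhot xs R k" using True params unfolding accepted_def by auto
  then have "eta1 * P \<le> ftil xs (fst (finm R k)) - ftil xs (xp R k)"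
    using P unfolding rhot_def P_def by (simp add: le_divide_eq)
  moreover have "eta1' * 2 * P \<le> eta1 * P" using params P by (intro mult_right_mono) auto
  moreover have "\<bar>ftil xs (fst (finm R k)) - f (th R k)\<bar> \<le> eta1' * P"
    using acc1[OF k I] unfolding P_def .
  moreover have "\<bar>ftil xs (xp R k) - f (th R k + st R k)\<bar> \<le> eta1' * P"
    using acc2[OF k I] unfolding P_def .
  ultimately have "f (th R k + st R k) \<le> f (th R k)"
    by (simp add: abs_le_iff)
  then show ?thesis using True runk[OF k] by simp
next
  case False then show ?thesis using runk[OF k] by simp
qed

lemma Dfin_big:
  assumes k: "k \<le> K" and I: "Inv k" and FLk: "FLk kef keg xs xhat gdec R k"
    and rh: "rhot xs R k < eta2"
  shows "tau < Dfin gdec R k"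
proof (rule ccontr)
  assume "\<not> tau < Dfin gdec R k"
  then have Dt: "Dfin gdec R k \<le> tau" by simp
  define D where "D = Dfin gdec R k"
  define P where "P = pdec xs R k"
  define M where "M = finm R k"
  have L: "Lb \<le> Din R k" using I unfolding Inv_def by simp
  have DL: "Lb \<le> D" using Dfin_ge[OF k L] unfolding D_def by simp
  have D0: "0 < D" using DL Lbpos by simp
  have "min D (g0 / kH) = D" using Dt tau_le unfolding D_def by simp
  then have PD: "1/2 * g0 * D \<le> P" using pdec_ge[OF k L] unfolding D_def P_def by simp
  have P0: "0 < P" using pdec_pos[OF k I] unfolding P_def by simp
  have FLs: "\<bar>f (th R k + st R k) - mval xs M (st R k)\<bar> \<le> kef * D^2"
    using FLk runk[OF k] unfolding FLk_def fully_linear_def D_def M_def by auto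
  have m0: "mval xs M 0 = ftil xs (fst M)" unfolding M_def by (rule mval0[OF lin_finm[OF k]])
  have Pdef: "P = mval xs M 0 - mval xs M (st R k)" unfolding P_def M_def pdec_def by simp
  have a2: "\<bar>ftil xs (xp R k) - f (th R k + st R k)\<bar> \<le> eta1' * P"
    using acc2[OF k I] unfolding P_def by simp
  have "kef * D^2 \<le> kef * (D * tau)"
    using Dt D0 params unfolding D_def power2_eq_square by (simp add: mult_left_mono)
  also have "\<dots> \<le> kef * (D * ((1 - eta2) * g0 / (4 * kef)))"
    using tau_le D0 params by (intro mult_left_mono) auto
  also have "\<dots> = (1 - eta2) / 2 * (1/2 * g0 * D)" using params by (simp add: field_simps)
  also have "\<dots> \<le> (1 - eta2) / 2 * P" using PD params by (intro mult_left_mono) auto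
  finally have kD: "kef * D^2 \<le> (1 - eta2) / 2 * P" .
  have "eta1' * P \<le> (1 - eta2) / 2 * P" using params P0 by (intro mult_right_mono) auto
  then have "eta2 * P \<le> ftil xs (fst M) - ftil xs (xp R k)"
  proof -
    have q: "eta2 * P = P - 2 * ((1 - eta2) / 2 * P)" by (simp add: field_simps)
    have "f (th R k + st R k) - mval xs M (st R k) \<le> kef * D^2"
       "mval xs M (st R k) - f (th R k + st R k) \<le> kef * D^2"
       "ftil xs (xp R k) - f (th R k + st R k) \<le> eta1' * P"
      using FLs a2 by (auto simp: abs_le_iff)
    then show ?thesis using q kD m0 Pdef \<open>eta1' * P \<le> (1 - eta2) / 2 * P\<close> by linarith
  qed
  then have "eta2 \<le> rhot xs R k" using P0 unfolding rhot_def P_def M_def by (simp add: le_divide_eq)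
  then show False using rh by simp
qed

lemma Din_next: assumes k: "k \<le> K" and I: "Inv k"
  shows "Lb \<le> Din R (Suc k) \<and> Din R (Suc k) \<le> Dmax"
proof -
  have L: "Lb \<le> Din R k" using I unfolding Inv_def by simp
  have DL: "Lb \<le> Dfin gdec R k" using Dfin_ge[OF k L] by simp
  have DU: "Dfin gdec R k \<le> Dmax" using Dfin_le[OF L] I unfolding Inv_def by simp
  have D0: "0 < Dfin gdec R k" using DL Lbpos by simp
  have LD: "Lb \<le> Dmax" using Lb_le params by simp
  show ?thesis
  proof (cases "eta2 \<le> rhot xs R k")
    case True
    then have "Din R (Suc k) = min (ginc * Dfin gdec R k) Dmax" using runk[OF k] by simp
    moreover have "Dfin gdec R k \<le> ginc * Dfin gdec R k" using D0 params by simp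
    ultimately show ?thesis using DL LD by simp
  next
    case F: False
    show ?thesis
    proof (cases "FLk kef keg xs xhat gdec R k")
      case False
      then have "Din R (Suc k) = Dfin gdec R k" using runk[OF k] F by simp
      then show ?thesis using DL DU by simp
    next
      case True
      then have eq: "Din R (Suc k) = gdec * Dfin gdec R k" using runk[OF k] F by simp
      have "tau < Dfin gdec R k" using Dfin_big[OF k I True] F by simp
      then have "gdec * tau \<le> gdec * Dfin gdec R k" using params by simp
      moreover have "gdec * Dfin gdec R k \<le> Dfin gdec R k" using D0 params by simp
      ultimately show ?thesis using eq Lb_le DU by simp
    qed
  qed
qed

lemma Inv_all: "k \<le> Suc K \<Longrightarrow> Inv k"
proof (induction k)
  case 0 then show ?case using run_th0 run_D0 Lb_le params unfolding Inv_def by simp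
next
  case (Suc k)
  then have k: "k \<le> K" and I: "Inv k" by auto
  show ?case using f_mono[OF k I] Din_next[OF k I] I unfolding Inv_def by simp
qed

end


context S begin

lemma concl: assumes k: "k \<le> K"
  shows "\<bar>ftil xs (fst (finm R k)) - fobj xs xhat (th R k)\<bar> \<le> eta1' * pdec xs R k \<and>
       \<bar>ftil xs (xp R k) - fobj xs xhat (th R k + st R k)\<bar> \<le> eta1' * pdec xs R k \<and>
       (crit R k \<longrightarrow> (\<forall>j \<le> ncrit R k.
          (\<forall>i. norm (fst (cm R k j) i - xhat i (th R k)) \<le> c * (gdec ^ j * Din R k)^2)
          \<and> cerr R k j \<le> c * (gdec ^ j * Din R k)^2)) \<and>
       (rebuilt kef keg xs xhat gdec eta1 eta2 R k \<longrightarrow>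
          (\<forall>i. norm (fst (m0 R (Suc k)) i - xhat i (th R (Suc k))) \<le> c * (Din R (Suc k))^2)
          \<and> ferr R k \<le> c * (Din R (Suc k))^2)"
proof (intro conjI impI allI)
  have I: "Inv k" using Inv_all k by simp
  have I2: "Inv (Suc k)" using Inv_all k by simp
  show "\<bar>ftil xs (fst (finm R k)) - fobj xs xhat (th R k)\<bar> \<le> eta1' * pdec xs R k"
    using acc1[OF k I] .
  show "\<bar>ftil xs (xp R k) - fobj xs xhat (th R k + st R k)\<bar> \<le> eta1' * pdec xs R k"
    using acc2[OF k I] .
  fix j assume cr: "crit R k" and j: "j \<le> ncrit R k"
  have L: "Lb \<le> gdec ^ j * Din R k" using crit_Delta[OF k cr _ j] I unfolding Inv_def by simp
  have ee: "e \<le> c * (gdec ^ j * Din R k)^2" using eLD[OF order_refl L] .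
  have E: "(\<forall>i. norm (fst (cm R k j) i - xhat i (th R k)) \<le> e) \<and> cerr R k j \<le> e"
    using ev k cr j unfolding evals_within_def by auto
  show "cerr R k j \<le> c * (gdec ^ j * Din R k)^2" using E ee by linarith
  fix i
  show "norm (fst (cm R k j) i - xhat i (th R k)) \<le> c * (gdec ^ j * Din R k)^2" using E ee
    by (meson order_trans)
next
  have I2: "Inv (Suc k)" using Inv_all k by simp
  have ee: "e \<le> c * (Din R (Suc k))^2" using eLD[OF order_refl] I2 unfolding Inv_def by simp
  have E: "(\<forall>i. norm (fst (m0 R (Suc k)) i - xhat i (th R (Suc k))) \<le> e) \<and> ferr R k \<le> e"
    using ev k unfolding evals_within_def by auto
  show "ferr R k \<le> c * (Din R (Suc k))^2" using E ee by linarith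
  fix i
  show "norm (fst (m0 R (Suc k)) i - xhat i (th R (Suc k))) \<le> c * (Din R (Suc k))^2"
    using E ee by (meson order_trans)
qed

end

theorem proposition2:
  fixes xs :: "'n::finite \<Rightarrow> 'b::euclidean_space"
    and xhat :: "'n \<Rightarrow> 'a::euclidean_space \<Rightarrow> 'b"
    and th0 :: 'a
    and D0 Dmax gdec ginc eta1 eta2 eta1' kef keg c kH :: real
  assumes "0 < Dmax" and "0 < gdec" and "gdec < 1" and "1 < ginc"
    and "0 < eta1" and "eta1 \<le> eta2" and "eta2 < 1"
    and "0 < eta1'" and "eta1' < min eta1 (1 - eta2) / 2"
    and "0 < D0" and "D0 \<le> Dmax"
    and "0 < kef" and "0 < keg" and "0 < c" and "1 \<le> kH"
    and "assumptionA xs xhat th0 Dmax"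
  shows "\<exists>C > 0. \<forall>eps K (R :: ('a, 'b, 'n) dfo_run).
    0 < eps \<and> eps \<le> 1 \<and>
    dfo_run xs xhat kef keg c Dmax gdec ginc eta1 eta2 eps th0 D0 K R \<and>
    assumptionB xs gdec kH K R \<and>
    (\<forall>k \<le> K. \<exists>G. (GDERIV (fobj xs xhat) (th R k) :> G) \<and> eps \<le> norm G) \<and>
    evals_within xs xhat (C * eps^2) K R
    \<longrightarrow>
    (\<forall>k \<le> K.
       \<bar>ftil xs (fst (finm R k)) - fobj xs xhat (th R k)\<bar> \<le> eta1' * pdec xs R k \<and>
       \<bar>ftil xs (xp R k) - fobj xs xhat (th R k + st R k)\<bar> \<le> eta1' * pdec xs R k \<and>
       (crit R k \<longrightarrow> (\<forall>j \<le> ncrit R k.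
          (\<forall>i. norm (fst (cm R k j) i - xhat i (th R k)) \<le> c * (gdec ^ j * Din R k)^2)
          \<and> cerr R k j \<le> c * (gdec ^ j * Din R k)^2)) \<and>
       (rebuilt kef keg xs xhat gdec eta1 eta2 R k \<longrightarrow>
          (\<forall>i. norm (fst (m0 R (Suc k)) i - xhat i (th R (Suc k))) \<le> c * (Din R (Suc k))^2)
          \<and> ferr R k \<le> c * (Din R (Suc k))^2))"
proof -
  note p = assms
  obtain Rb where Rb0: "0 \<le> Rb" and Rb: "\<forall>theta z. fobj xs xhat theta \<le> fobj xs xhat th0 \<and> dist z theta \<le> Dmax
            \<longrightarrow> norm (rres xs xhat z) \<le> Rb"
    using rres_bound[OF assms(16) assms(1)] by blast
  define n where "n = real CARD('n)"
  have n1: "1 \<le> n" unfolding n_def by (simp add: Suc_leI)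
  define a1 where "a1 = 1 / (1 + keg)"
  define t1 where "t1 = min (a1 / kH) ((1 - eta2) * a1 / (4 * kef))"
  define l where "l = min D0 (gdec * t1)"
  define C where "C = min 1 (min (c * l^2) (eta1' * a1 * l / (2 * (2 * Rb + n))))"
  have a1p: "0 < a1" using p unfolding a1_def by simp
  have t1p: "0 < t1" using p a1p unfolding t1_def by simp
  have lp: "0 < l" using p t1p unfolding l_def by simp
  have Kp: "0 < 2 * Rb + n" using Rb0 n1 by simp
  have Cp: "0 < C" unfolding C_def using lp a1p Kp p by simp
  show ?thesis
  proof (rule exI[of _ C], rule conjI[OF Cp], rule allI, rule allI, rule allI, rule impI)
    fix eps K and R :: "('a, 'b, 'n) dfo_run"
    assume H: "0 < eps \<and> eps \<le> 1 \<and>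
      dfo_run xs xhat kef keg c Dmax gdec ginc eta1 eta2 eps th0 D0 K R \<and>
      assumptionB xs gdec kH K R \<and>
      (\<forall>k \<le> K. \<exists>G. (GDERIV (fobj xs xhat) (th R k) :> G) \<and> eps \<le> norm G) \<and>
      evals_within xs xhat (C * eps^2) K R"
    then have eps: "0 < eps" "eps \<le> 1" by auto
    define g0 where "g0 = eps / (1 + keg)"
    define tau where "tau = min (g0 / kH) ((1 - eta2) * g0 / (4 * kef))"
    define Lb where "Lb = min D0 (gdec * tau)"
    have g0e: "g0 = eps * a1" unfolding g0_def a1_def by simp
    have taue: "tau = eps * t1" unfolding tau_def t1_def g0e using eps
      by (simp add: min_mult_distrib_left mult.assoc mult.left_commute[of eps])
    have Lbl: "eps * l \<le> Lb"
    proof -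
      have "eps * l \<le> eps * D0" using eps unfolding l_def by (intro mult_left_mono) auto
      also have "\<dots> \<le> D0" using eps p by (simp add: mult_le_cancel_right1)
      finally have 1: "eps * l \<le> D0" .
      have "eps * l \<le> eps * (gdec * t1)" using eps unfolding l_def by (intro mult_left_mono) auto
      then have 2: "eps * l \<le> gdec * tau" unfolding taue by (simp add: algebra_simps)
      show ?thesis using 1 2 unfolding Lb_def by simp
    qed
    have e2: "0 < eps^2" "eps^2 \<le> 1" using eps by (auto simp: power_le_one)
    have s1: "C * eps^2 \<le> 1"
    proof -
      have "C * eps^2 \<le> 1 * 1" using e2 Cp unfolding C_def by (intro mult_mono) auto
      then show ?thesis by simp
    qed
    have s2: "C * eps^2 \<le> c * Lb^2"
    proof -
      have "C * eps^2 \<le> (c * l^2) * eps^2" using e2 unfolding C_def by (intro mult_right_mono) auto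
      also have "\<dots> = c * (eps * l)^2" by (simp add: power_mult_distrib)
      also have "\<dots> \<le> c * Lb^2" using Lbl lp eps p by (intro mult_left_mono power_mono) auto
      finally show ?thesis .
    qed
    have s3: "(2*Rb + n) * (C * eps^2) \<le> eta1' * (1/2 * g0 * Lb)"
    proof -
      have "(2*Rb + n) * (C * eps^2) \<le> (2*Rb + n) * ((eta1' * a1 * l / (2 * (2 * Rb + n))) * eps^2)"
        using e2 Kp unfolding C_def by (intro mult_left_mono mult_right_mono) auto
      also have "\<dots> = eta1' * (1/2 * (eps * a1) * (eps * l))" using Kp
        by (simp add: field_simps power2_eq_square)
      also have "\<dots> \<le> eta1' * (1/2 * g0 * Lb)"
        using Lbl g0e eps a1p p by (intro mult_left_mono) auto
      finally show ?thesis .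
    qed
    interpret S xs xhat th0 D0 Dmax gdec ginc eta1 eta2 eta1' kef keg c kH eps K R Rb C
      g0 tau Lb "C * eps^2"
      using p H Rb s1 s2 s3 Cp unfolding n_def g0_def tau_def Lb_def
      by unfold_locales auto
    show "\<forall>k \<le> K.
       \<bar>ftil xs (fst (finm R k)) - fobj xs xhat (th R k)\<bar> \<le> eta1' * pdec xs R k \<and>
       \<bar>ftil xs (xp R k) - fobj xs xhat (th R k + st R k)\<bar> \<le> eta1' * pdec xs R k \<and>
       (crit R k \<longrightarrow> (\<forall>j \<le> ncrit R k.
          (\<forall>i. norm (fst (cm R k j) i - xhat i (th R k)) \<le> c * (gdec ^ j * Din R k)^2)
          \<and> cerr R k j \<le> c * (gdec ^ j * Din R k)^2)) \<and>
       (rebuilt kef keg xs xhat gdec eta1 eta2 R k \<longrightarrow>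
          (\<forall>i. norm (fst (m0 R (Suc k)) i - xhat i (th R (Suc k))) \<le> c * (Din R (Suc k))^2)
          \<and> ferr R k \<le> c * (Din R (Suc k))^2)"
      using concl by blast
  qed
qed



end
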